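(* Let $H$ be a digraph and $u,v\in V(H)$ with $d(u,v)=n$ in $H$, where $n\ge 4$. Let $Q=x_0x_1\ldots x_n$ be a shortest $(u,v)$-path in $H$. If $H[V(Q)]$ is a semicomplete digraph, then for any $x_i,x_j\in V(Q)$ with $0\le i<j\le n$ and any $p\in\{2,3,\ldots,n-1\}$, there exists a path of length $p$ from $x_j$ to $x_i$ in $H[V(Q)]$.
   Context: Digraphs are finite, without loops or multiple arcs. $d(u,v)$ is the length of a shortest $(u,v)$-path. $H[S]$ denotes the subdigraph induced by $S$. A semicomplete digraph is one in which every two distinct vertices $x,y$ are adjacent, i.e. $xy$ or $yx$ is an arc. *)

theory Defs
  imports Main
begin

text \<open>A digraph is given by a vertex set V and an arc set A (finite, no loops;
  multiple arcs are excluded automatically since A is a set of pairs).\<close>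

definition digraph :: "'a set \<Rightarrow> ('a \<times> 'a) set \<Rightarrow> bool" where
  "digraph V A \<longleftrightarrow> finite V \<and> A \<subseteq> V \<times> V \<and> (\<forall>x. (x, x) \<notin> A)"

definition is_path :: "'a set \<Rightarrow> ('a \<times> 'a) set \<Rightarrow> 'a list \<Rightarrow> bool" where
  "is_path V A P \<longleftrightarrow> P \<noteq> [] \<and> distinct P \<and> set P \<subseteq> V \<and>
     (\<forall>i. Suc i < length P \<longrightarrow> (P ! i, P ! Suc i) \<in> A)"

definition path_len :: "'a list \<Rightarrow> nat" where
  "path_len P = length P - 1"

definition is_path_from_to :: "'a set \<Rightarrow> ('a \<times> 'a) set \<Rightarrow> 'a \<Rightarrow> 'a \<Rightarrow> 'a list \<Rightarrow> bool" where
  "is_path_from_to V A u v P \<longleftrightarrow> is_path V A P \<and> hd P = u \<and> last P = v"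

definition dist :: "'a set \<Rightarrow> ('a \<times> 'a) set \<Rightarrow> 'a \<Rightarrow> 'a \<Rightarrow> nat" where
  "dist V A u v = (LEAST k. \<exists>P. is_path_from_to V A u v P \<and> path_len P = k)"

definition induced_arcs :: "('a \<times> 'a) set \<Rightarrow> 'a set \<Rightarrow> ('a \<times> 'a) set" where
  "induced_arcs A S = A \<inter> (S \<times> S)"

definition semicomplete :: "'a set \<Rightarrow> ('a \<times> 'a) set \<Rightarrow> bool" where
  "semicomplete V A \<longleftrightarrow> digraph V A \<and>
     (\<forall>x\<in>V. \<forall>y\<in>V. x \<noteq> y \<longrightarrow> (x, y) \<in> A \<or> (y, x) \<in> A)"

end

theory Submission
  imports Defs
begin

lemma succ_upt:
  assumes "\<And>x. a \<le> x \<Longrightarrow> Suc x < b \<Longrightarrow> R x (Suc x)"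
  shows "successively R [a..<b]"
  unfolding successively_conv_nth using assms by auto

lemma idx_path:
  assumes dQ: "distinct Q" and ne: "L \<noteq> []" and dL: "distinct L"
    and lt: "\<forall>x\<in>set L. x < length Q"
    and sc: "successively (\<lambda>x y. (Q!x, Q!y) \<in> B) L"
    and W: "set Q \<subseteq> W"
  shows "is_path W B (map ((!) Q) L)"
  unfolding is_path_def
proof (intro conjI)
  show "map ((!) Q) L \<noteq> []" using ne by simp
  show "distinct (map ((!) Q) L)"
    using dQ dL lt by (auto simp: distinct_map inj_on_def nth_eq_iff_index_eq)
  show "set (map ((!) Q) L) \<subseteq> W" using lt W by auto
  show "\<forall>i. Suc i < length (map ((!) Q) L) \<longrightarrow>
      (map ((!) Q) L ! i, map ((!) Q) L ! Suc i) \<in> B"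
    using sc by (auto simp: successively_conv_nth)
qed

theorem lemma2p6:
  fixes V :: "'a set" and A :: "('a \<times> 'a) set" and u v :: 'a and n :: nat and Q :: "'a list"
  assumes "digraph V A"
    and "u \<in> V" and "v \<in> V"
    and "dist V A u v = n" and "n \<ge> 4"
    and "is_path_from_to V A u v Q" and "path_len Q = n"
    and "semicomplete (set Q) (induced_arcs A (set Q))"
  shows "\<forall>i j p. i < j \<and> j \<le> n \<and> 2 \<le> p \<and> p \<le> n - 1 \<longrightarrow>
           (\<exists>P. is_path_from_to (set Q) (induced_arcs A (set Q)) (Q ! j) (Q ! i) P
                \<and> path_len P = p)"
proof -
  have QP: "is_path V A Q" and hdQ: "hd Q = u" and lastQ: "last Q = v"
    using assms(6) by (auto simp: is_path_from_to_def)
  have lenQ: "length Q = Suc n" using assms(7) assms(5) QP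
    by (auto simp: path_len_def is_path_def)
  have dQ: "distinct Q" and QV: "set Q \<subseteq> V"
    and stepA: "\<And>k. Suc k < length Q \<Longrightarrow> (Q!k, Q!Suc k) \<in> A"
    using QP by (auto simp: is_path_def)
  have hd0: "\<And>L. L \<noteq> [] \<Longrightarrow> hd (map ((!) Q) L) = Q ! hd L" by (simp add: hd_map)
  have last0: "\<And>L. L \<noteq> [] \<Longrightarrow> last (map ((!) Q) L) = Q ! last L" by (simp add: last_map)
  have noshort: "(Q!a, Q!b) \<notin> A" if ab: "a + 2 \<le> b" "b \<le> n" for a b
  proof
    assume arc: "(Q!a, Q!b) \<in> A"
    define L where "L = [0..<Suc a] @ [b..<Suc n]"
    have Lne: "L \<noteq> []" by (simp add: L_def)
    have "is_path V A (map ((!) Q) L)"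
    proof (rule idx_path[OF dQ Lne])
      show "distinct L" using ab by (auto simp: L_def)
      show "\<forall>x\<in>set L. x < length Q" using lenQ ab by (auto simp: L_def)
      show "set Q \<subseteq> V" by (fact QV)
      show "successively (\<lambda>x y. (Q ! x, Q ! y) \<in> A) L"
        unfolding L_def successively_append_iff
        using ab arc lenQ by (auto simp del: upt_Suc simp: hd_upt last_upt intro!: succ_upt stepA)
    qed
    moreover have "hd (map ((!) Q) L) = u"
    proof -
      have "hd L = 0" by (simp add: L_def hd_append hd_upt del: upt_Suc)
      moreover have "Q \<noteq> []" using lenQ by auto
      ultimately show ?thesis using hdQ by (simp add: hd0[OF Lne] hd_conv_nth)
    qed
    moreover have "last (map ((!) Q) L) = v"
    proof -
      have "last L = n" using ab by (simp add: L_def last_upt del: upt_Suc)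
      moreover have "Q \<noteq> []" using lenQ by auto
      ultimately show ?thesis using lastQ lenQ by (simp add: last0[OF Lne] last_conv_nth)
    qed
    ultimately have "is_path_from_to V A u v (map ((!) Q) L)"
      by (simp add: is_path_from_to_def)
    hence "dist V A u v \<le> path_len (map ((!) Q) L)"
      unfolding dist_def by (intro Least_le) blast
    moreover have "path_len (map ((!) Q) L) < n" using ab by (simp add: L_def path_len_def)
    ultimately show False using assms(4) by simp
  qed
  define IA where "IA = induced_arcs A (set Q)"
  have stepI: "(Q!k, Q!Suc k) \<in> IA" if "k < n" for k
    using stepA[of k] that lenQ by (simp add: IA_def induced_arcs_def)
  have jumpI: "(Q!b, Q!a) \<in> IA" if "a + 2 \<le> b" "b \<le> n" for a b
  proof -
    have "Q!a \<noteq> Q!b" using dQ lenQ that by (simp add: nth_eq_iff_index_eq)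
    moreover have "Q!a \<in> set Q" "Q!b \<in> set Q" using lenQ that by auto
    ultimately have "(Q!a, Q!b) \<in> IA \<or> (Q!b, Q!a) \<in> IA"
      using assms(8) unfolding semicomplete_def IA_def by blast
    moreover have "(Q!a, Q!b) \<notin> IA" using noshort[OF that] by (simp add: IA_def induced_arcs_def)
    ultimately show ?thesis by blast
  qed
  define R where "R = (\<lambda>x y. (Q!x, Q!y) \<in> IA)"
  have build: "\<exists>P. is_path_from_to (set Q) IA (Q ! j) (Q ! i) P \<and> path_len P = p"
    if "L \<noteq> []" "distinct L" "\<forall>x\<in>set L. x \<le> n" "successively R L"
       "hd L = j" "last L = i" "length L = Suc p" for L i j p
  proof (intro exI conjI)
    show "is_path_from_to (set Q) IA (Q ! j) (Q ! i) (map ((!) Q) L)"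
    proof -
      have "\<forall>x\<in>set L. x < length Q" using that(3) lenQ by auto
      hence "is_path (set Q) IA (map ((!) Q) L)"
        using idx_path[OF dQ that(1,2)] that(4) by (simp add: R_def)
      thus ?thesis unfolding is_path_from_to_def
        using that hd0[OF that(1)] last0[OF that(1)] by simp
    qed
    show "path_len (map ((!) Q) L) = p" using that by (simp add: path_len_def)
  qed
  show ?thesis
  proof (intro allI impI)
    fix i j p assume h: "i < j \<and> j \<le> n \<and> 2 \<le> p \<and> p \<le> n - 1"
    show "\<exists>P. is_path_from_to (set Q) (induced_arcs A (set Q)) (Q ! j) (Q ! i) P \<and> path_len P = p"
    proof (cases "p \<le> n - j + i + 1")
      case True
      define t1 where "t1 = min (p - 1) (n - j)"
      define t2 where "t2 = p - 1 - t1"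
      have t2i: "t2 \<le> i" "t1 \<le> n - j" "t1 + t2 = p - 1" using True h by (auto simp: t1_def t2_def)
      define L where "L = [j..<Suc (j + t1)] @ [i - t2..<Suc i]"
      have "\<exists>P. is_path_from_to (set Q) IA (Q ! j) (Q ! i) P \<and> path_len P = p"
      proof (rule build[of L])
        show "L \<noteq> []" by (simp add: L_def)
        show "distinct L" using h by (auto simp: L_def)
        show "\<forall>x\<in>set L. x \<le> n" using h by (auto simp: L_def t1_def)
        show "successively R L"
          unfolding L_def successively_append_iff R_def
          using h t2i by (auto simp del: upt_Suc simp: hd_upt last_upt intro!: succ_upt stepI jumpI)
        show "hd L = j" by (simp add: L_def hd_append hd_upt del: upt_Suc)
        show "last L = i" by (simp add: L_def)
        show "length L = Suc p" using h t2i by (simp add: L_def t1_def t2_def)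
      qed
      thus ?thesis by (simp add: IA_def)
    next
      case False
      define e where "e = p - (n - j + i + 2)"
      define d where "d = (if 4 \<le> j then j - 2 else j - 1)"
      define c where "c = d - e"
      have ar: "i + 1 \<le> c" "c \<le> d" "d \<le> j - 1" "c + 2 \<le> n" "2 \<le> d" "d = c + e"
        "p = n - j + i + 2 + e"
        using False h assms(5) by (auto simp: e_def d_def c_def)
      define L where "L = [j..<Suc n] @ [c..<Suc d] @ [0..<Suc i]"
      have "\<exists>P. is_path_from_to (set Q) IA (Q ! j) (Q ! i) P \<and> path_len P = p"
      proof (rule build[of L])
        show "L \<noteq> []" by (simp add: L_def)
        show "distinct L" using h ar by (auto simp: L_def)
        show "\<forall>x\<in>set L. x \<le> n" using h ar by (auto simp: L_def)
        show "successively R L"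
          unfolding L_def successively_append_iff R_def
          using h ar by (auto simp del: upt_Suc simp: hd_upt last_upt intro!: succ_upt stepI jumpI)
        show "hd L = j" using h by (simp add: L_def hd_append hd_upt del: upt_Suc)
        show "last L = i" by (simp add: L_def)
        show "length L = Suc p" using h ar by (simp add: L_def del: upt_Suc) arith
      qed
      thus ?thesis by (simp add: IA_def)
    qed
  qed
qed

end
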